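(* For every hypergraph $\mathcal{C}$ we have $\operatorname{conn_h}(\operatorname{Ind}(\mathcal{C}))\ge \psi(\mathcal{C})-2$.
   Context: A hypergraph $\mathcal{C}$ on a finite vertex set $V$ is a family of pairwise incomparable subsets of $V$ (its edges), each of cardinality at least $2$; vertices lying in no edge are allowed. The independence complex $\operatorname{Ind}(\mathcal{C})$ is the simplicial complex on $V$ whose faces are the subsets of $V$ containing no edge of $\mathcal{C}$ (if $V=\emptyset$ it is $\{\emptyset\}$). For an edge $F$: $\mathcal{C}-F$ is the hypergraph on $V$ with edge set $\mathcal{C}\setminus\{F\}$; $N_{\mathcal{C}}(F)=\bigcup\{E\setminus F : E\in\mathcal{C},\ |E\setminus F|=1\}$; and $\mathcal{C}:F$ is the hypergraph on $V\setminus(F\cup N_{\mathcal{C}}(F))$ whose edges are the members of cardinality at least $2$ among the inclusion-minimal members of the family $\{E\setminus F : E\in \mathcal{C}-F\}$. The number $\psi(\mathcal{C})\in\mathbb{Z}_{\ge 0}\cup\{\infty\}$ is defined recursively: $\psi(\mathcal{C})=0$ if $V=\emptyset$; $\psi(\mathcal{C})=\infty$ if $V\neq\emptyset$ and $\mathcal{C}$ has no edges; otherwise $\psi(\mathcal{C})=\max_{F\in\mathcal{C}}\min\{\psi(\mathcal{C}-F),\ \psi(\mathcal{C}:F)+|F|-1\}$. The homological connectivity $\operatorname{conn_h}(\Delta)$ is the largest integer $k$ such that $\tilde H_i(\Delta;\mathbb{Z})=0$ for all $i\le k$ ($\infty$ if all vanish; in particular $\operatorname{conn_h}(\{\emptyset\})=-2$).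 *)

theory Defs
  imports Main "HOL-Library.Extended_Real"
begin

definition is_hypergraph :: "'a set \<Rightarrow> 'a set set \<Rightarrow> bool" where
  "is_hypergraph V C \<longleftrightarrow> finite V \<and> (\<forall>E\<in>C. E \<subseteq> V \<and> 2 \<le> card E)
      \<and> (\<forall>E\<in>C. \<forall>E'\<in>C. E \<subseteq> E' \<longrightarrow> E = E')"

definition Ind :: "'a set \<Rightarrow> 'a set set \<Rightarrow> 'a set set" where
  "Ind V C = {\<sigma>. \<sigma> \<subseteq> V \<and> (\<forall>E\<in>C. \<not> E \<subseteq> \<sigma>)}"

definition nbhd :: "'a set set \<Rightarrow> 'a set \<Rightarrow> 'a set" where
  "nbhd C F = \<Union>{E - F | E. E \<in> C \<and> card (E - F) = 1}"

definition colon_edges :: "'a set set \<Rightarrow> 'a set \<Rightarrow> 'a set set" where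
  "colon_edges C F =
     (let fam = (\<lambda>E. E - F) ` (C - {F})
      in {M \<in> fam. (\<forall>M'\<in>fam. \<not> M' \<subset> M) \<and> 2 \<le> card M})"

definition colon_vertices :: "'a set \<Rightarrow> 'a set set \<Rightarrow> 'a set \<Rightarrow> 'a set" where
  "colon_vertices V C F = V - (F \<union> nbhd C F)"

lemma card_colon_edges_le:
  assumes "finite C" "F \<in> C"
  shows "card (colon_edges C F) < card C"
proof -
  have "colon_edges C F \<subseteq> (\<lambda>E. E - F) ` (C - {F})"
    unfolding colon_edges_def Let_def by blast
  hence "card (colon_edges C F) \<le> card ((\<lambda>E. E - F) ` (C - {F}))"
    using assms by (intro card_mono) auto
  also have "\<dots> \<le> card (C - {F})" using assms by (intro card_image_le) auto
  also have "\<dots> < card C" using assms by (meson card_Diff1_less)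
  finally show ?thesis .
qed

text \<open>Arguments that are not (finite) set systems
of subsets of V of size at least 2 get the junk value 0; such arguments never arise
from hypergraphs.\<close>
function psi :: "'a set \<Rightarrow> 'a set set \<Rightarrow> enat" where
  "psi V C =
     (if \<not> (finite V \<and> (\<forall>E\<in>C. E \<subseteq> V \<and> 2 \<le> card E)) then 0
      else if V = {} then 0
      else if C = {} then \<infinity>
      else Max ((\<lambda>F. min (psi V (C - {F}))
                          (psi (colon_vertices V C F) (colon_edges C F) + enat (card F - 1))) ` C))"
  by auto
termination
proof (relation "measure (\<lambda>(V, C). card V + card C)", goal_cases)
  case 1 then show ?case by simp
next
  case (2 V C F)
  have fC: "finite C" using 2 by (meson finite_Pow_iff finite_subset subsetI PowI)
  have "card (C - {F}) < card C" using fC 2 by (intro card_Diff1_less) auto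
  then show ?case by simp
next
  case (3 V C F)
  have fC: "finite C" using 3 by (meson finite_Pow_iff finite_subset subsetI PowI)
  have FV: "F \<subseteq> V" "2 \<le> card F" using 3 by auto
  then have "F \<noteq> {}" by auto
  then have "colon_vertices V C F \<subset> V" using FV unfolding colon_vertices_def by blast
  then have "card (colon_vertices V C F) < card V" using 3 by (simp add: psubset_card_mono)
  moreover have "card (colon_edges C F) < card C" using card_colon_edges_le fC 3 by blast
  ultimately show ?case by simp
qed

text \<open>A simplicial complex K is given by its set of faces (including the empty face).
We fix a linear order on vertices to orient simplices.  An i-chain is an integer-valued
function on faces, supported on faces of dimension i (cardinality i+1); the empty face
has dimension -1, giving the augmented (reduced) chain complex.\<close>
definition is_chain :: "'a set set \<Rightarrow> int \<Rightarrow> ('a set \<Rightarrow> int) \<Rightarrow> bool" where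
  "is_chain K i c \<longleftrightarrow> (\<forall>\<sigma>. c \<sigma> \<noteq> 0 \<longrightarrow> \<sigma> \<in> K \<and> finite \<sigma> \<and> int (card \<sigma>) = i + 1)"

definition bd :: "'a::linorder set set \<Rightarrow> ('a set \<Rightarrow> int) \<Rightarrow> ('a set \<Rightarrow> int)" where
  "bd K c \<sigma> = (\<Sum>v \<in> \<Union>K - \<sigma>. (-1) ^ card {u \<in> \<sigma>. u < v} * c (insert v \<sigma>))"

definition reduced_homology_trivial :: "'a::linorder set set \<Rightarrow> int \<Rightarrow> bool" where
  "reduced_homology_trivial K i \<longleftrightarrow>
     (\<forall>z. is_chain K i z \<and> bd K z = (\<lambda>_. 0) \<longrightarrow>
          (\<exists>c. is_chain K (i + 1) c \<and> bd K c = z))"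

definition conn_h :: "'a::linorder set set \<Rightarrow> ereal" where
  "conn_h K = Sup {ereal (real_of_int k) | k. \<forall>i\<le>k. reduced_homology_trivial K i}"

end

theory Submission
  imports Defs
begin

definition sg :: "'a::linorder set \<Rightarrow> 'a \<Rightarrow> int" where
  "sg s v = (-1) ^ card {u \<in> s. u < v}"

definition bdV :: "'a::linorder set \<Rightarrow> ('a set \<Rightarrow> int) \<Rightarrow> ('a set \<Rightarrow> int)" where
  "bdV V c s = (\<Sum>v \<in> V - s. sg s v * c (insert v s))"

lemma m1sq: "(-1::int) ^ n * (-1) ^ n = 1"
  by (simp flip: power_add)

lemma sg_sq: "sg s v * sg s v = 1"
  by (simp add: sg_def m1sq)

lemma bd_eq_bdV: "bd K c = bdV (\<Union>K) c"
  by (simp add: bd_def bdV_def sg_def fun_eq_iff)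

lemma bdV_mono:
  assumes "finite V" "W \<subseteq> V" "\<And>t. c t \<noteq> 0 \<Longrightarrow> t \<subseteq> W"
  shows "bdV V c = bdV W c"
proof
  fix s
  show "bdV V c s = bdV W c s" unfolding bdV_def
    apply (rule sum.mono_neutral_right)
    using assms by auto
qed

lemma bd_chain_eq:
  assumes "finite V" "K \<subseteq> Pow V" "is_chain K i c"
  shows "bd K c = bdV V c"
proof -
  have "bdV V c = bdV (\<Union>K) c"
    by (rule bdV_mono) (use assms in \<open>auto simp: is_chain_def\<close>)
  then show ?thesis by (simp add: bd_eq_bdV)
qed

lemma sg_insert:
  assumes "finite s" "v \<notin> s"
  shows "sg (insert v s) w = (if v < w then - sg s w else sg s w)"
proof (cases "v < w")
  case True
  have "{u \<in> insert v s. u < w} = insert v {u \<in> s. u < w}" using True by auto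
  moreover have "card (insert v {u \<in> s. u < w}) = Suc (card {u \<in> s. u < w})"
    using assms by (intro card_insert_disjoint) auto
  ultimately show ?thesis using True by (simp add: sg_def)
next
  case False
  have "{u \<in> insert v s. u < w} = {u \<in> s. u < w}" using False by auto
  then show ?thesis using False by (simp add: sg_def)
qed

lemma bdV_diff: "bdV V (\<lambda>s. f s - g s) s = bdV V f s - bdV V g s"
  by (simp add: bdV_def sum_subtractf right_diff_distrib)

lemma bdV_scale: "bdV V (\<lambda>s. k * f s) s = k * bdV V f s"
  by (simp add: bdV_def sum_distrib_left algebra_simps)

lemma bdV_bdV:
  assumes "finite V" "\<And>t. c t \<noteq> 0 \<Longrightarrow> finite t"
  shows "bdV V (bdV V c) s = 0"
proof (cases "finite s")
  case False
  have "c (insert w (insert v s)) = 0" for v w using assms(2) False by (meson finite_insert)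
  then show ?thesis by (simp add: bdV_def)
next
  case True
  define A where "A = V - s"
  define h where "h v w = (if v = w then 0 else sg s v * ((if v < w then -1 else 1) * sg s w) * c (insert w (insert v s)))" for v w
  have fA: "finite A" using assms A_def by auto
  have row: "sg s v * (\<Sum>w\<in>V - insert v s. sg (insert v s) w * c (insert w (insert v s)))
       = (\<Sum>w\<in>A. h v w)" if vA: "v \<in> A" for v
  proof -
    have vs: "v \<notin> s" using vA A_def by auto
    have "(\<Sum>w\<in>A. h v w) = (\<Sum>w\<in>A - {v}. h v w)"
      by (rule sum.mono_neutral_right) (auto simp: h_def fA)
    also have "\<dots> = (\<Sum>w\<in>A - {v}. sg s v * (sg (insert v s) w * c (insert w (insert v s))))"
      by (rule sum.cong) (auto simp: h_def sg_insert[OF True vs])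
    also have "A - {v} = V - insert v s" using A_def by auto
    finally show ?thesis by (simp add: sum_distrib_left)
  qed
  have eq1: "bdV V (bdV V c) s = (\<Sum>v\<in>A. \<Sum>w\<in>A. h v w)"
    unfolding bdV_def[of V "bdV V c"] A_def[symmetric]
    by (rule sum.cong) (auto simp: bdV_def row)
  have anti: "h v w = - h w v" for v w
    by (cases v w rule: linorder_cases) (auto simp: h_def insert_commute)
  have "(\<Sum>v\<in>A. \<Sum>w\<in>A. h v w) = (\<Sum>w\<in>A. \<Sum>v\<in>A. h v w)" by (rule sum.swap)
  also have "\<dots> = (\<Sum>w\<in>A. \<Sum>v\<in>A. - h w v)" by (intro sum.cong refl) (rule anti)
  also have "\<dots> = - (\<Sum>w\<in>A. \<Sum>v\<in>A. h w v)" by (simp add: sum_negf)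
  finally show ?thesis using eq1 by simp
qed

lemma bdV_chain:
  assumes "finite V" "K \<subseteq> Pow V" "\<And>s t. s \<in> K \<Longrightarrow> t \<subseteq> s \<Longrightarrow> t \<in> K" "is_chain K (k+1) c"
  shows "is_chain K k (bdV V c)"
  unfolding is_chain_def
proof (intro allI impI)
  fix s assume "bdV V c s \<noteq> 0"
  then obtain v where v: "v \<in> V - s" "c (insert v s) \<noteq> 0"
    unfolding bdV_def by (metis (no_types, lifting) mult_zero_right sum.neutral)
  then have "insert v s \<in> K" "finite (insert v s)" "int (card (insert v s)) = k + 1 + 1"
    using assms(4) unfolding is_chain_def by auto
  moreover have "card (insert v s) = Suc (card s)" using v calculation by auto
  ultimately show "s \<in> K \<and> finite s \<and> int (card s) = k + 1"
    using assms(3) by auto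
qed

lemma low_trivial:
  assumes "i \<le> -2"
  shows "reduced_homology_trivial K i"
  unfolding reduced_homology_trivial_def
proof (intro allI impI)
  fix z assume "is_chain K i z \<and> bd K z = (\<lambda>_. 0)"
  then have "z = (\<lambda>_. 0)" using assms unfolding is_chain_def by fastforce
  then show "\<exists>c. is_chain K (i + 1) c \<and> bd K c = z"
    by (intro exI[of _ "\<lambda>_. 0"]) (simp add: is_chain_def bd_def fun_eq_iff)
qed


definition eps :: "'a::linorder set \<Rightarrow> 'a set \<Rightarrow> int" where
  "eps F t = (\<Prod>u\<in>t. (-1) ^ card {f \<in> F. u < f})"

lemma eps_insert:
  assumes "finite t" "v \<notin> t"
  shows "eps F (insert v t) = (-1) ^ card {f \<in> F. v < f} * eps F t"
  using assms by (simp add: eps_def)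

lemma eps_sq: "eps F t * eps F t = 1"
  unfolding eps_def by (simp flip: prod.distrib add: m1sq)

lemma sg_union:
  assumes "finite F" "finite r" "r \<inter> F = {}"
  shows "sg (F \<union> r) v = (-1) ^ card {u \<in> F. u < v} * sg r v"
proof -
  have "{u \<in> F \<union> r. u < v} = {u \<in> F. u < v} \<union> {u \<in> r. u < v}" by auto
  moreover have "card ({u \<in> F. u < v} \<union> {u \<in> r. u < v}) = card {u \<in> F. u < v} + card {u \<in> r. u < v}"
    using assms by (intro card_Un_disjoint) auto
  ultimately show ?thesis by (simp add: sg_def power_add)
qed

lemma split_F:
  fixes F :: "'a::linorder set"
  assumes "finite F" "v \<notin> F"
  shows "(-1::int) ^ card {u \<in> F. u < v} = (-1) ^ card F * (-1) ^ card {f \<in> F. v < f}"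
proof -
  have "x < v" if "x \<in> F" "\<not> v < x" for x
  proof -
    have "x \<noteq> v" using that assms(2) by auto
    then show ?thesis using that(2) by (cases x v rule: linorder_cases) auto
  qed
  then have "F = {u \<in> F. u < v} \<union> {f \<in> F. v < f}" by auto
  then have "card F = card ({u \<in> F. u < v} \<union> {f \<in> F. v < f})" by simp
  also have "\<dots> = card {u \<in> F. u < v} + card {f \<in> F. v < f}"
    using assms by (intro card_Un_disjoint) auto
  finally have "(-1::int) ^ card F * (-1) ^ card {f \<in> F. v < f}
     = (-1) ^ card {u \<in> F. u < v} * ((-1) ^ card {f \<in> F. v < f} * (-1) ^ card {f \<in> F. v < f})"
    by (simp add: power_add)
  then show ?thesis by (simp add: m1sq)
qed

lemma KF:
  fixes F :: "'a::linorder set"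
  assumes fV: "finite V" and fF: "finite F" and fr: "finite r" and rF: "r \<inter> F = {}"
  shows "bdV V (\<lambda>t. if t \<inter> F = {} then eps F t * g (F \<union> t) else 0) r
         = (-1) ^ card F * eps F r * bdV V g (F \<union> r)"
proof -
  let ?w = "\<lambda>t. if t \<inter> F = {} then eps F t * g (F \<union> t) else 0"
  have "bdV V ?w r = (\<Sum>v\<in>V - (F \<union> r). sg r v * ?w (insert v r))"
    unfolding bdV_def by (rule sum.mono_neutral_right) (use fV in auto)
  also have "\<dots> = (\<Sum>v\<in>V - (F \<union> r). (-1) ^ card F * eps F r * (sg (F \<union> r) v * g (insert v (F \<union> r))))"
  proof (rule sum.cong[OF refl])
    fix v assume v: "v \<in> V - (F \<union> r)"
    have vF: "v \<notin> F" and vr: "v \<notin> r" using v by auto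
    have e: "eps F (insert v r) = (-1) ^ card {f \<in> F. v < f} * eps F r"
      by (rule eps_insert[OF fr vr])
    have s: "sg (F \<union> r) v = (-1) ^ card F * (-1) ^ card {f \<in> F. v < f} * sg r v"
      using sg_union[OF fF fr rF] split_F[OF fF vF] by simp
    have i: "insert v r \<inter> F = {}" "F \<union> insert v r = insert v (F \<union> r)" using vF rF by auto
    define a where "a = (-1::int) ^ card F"
    define q where "q = (-1::int) ^ card {f \<in> F. v < f}"
    have aa: "a * a = 1" unfolding a_def by (rule m1sq)
    have ee: "eps F r * eps F r = 1" by (rule eps_sq)
    have w1: "?w (insert v r) = eps F (insert v r) * g (insert v (F \<union> r))"
      using i by simp
    have l: "sg r v * ?w (insert v r) = sg r v * (q * eps F r * g (insert v (F \<union> r)))"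
      unfolding w1 e q_def using vF rF by simp
    have rr: "(-1) ^ card F * eps F r * (sg (F \<union> r) v * g (insert v (F \<union> r)))
        = (a * a) * (sg r v * (q * eps F r * g (insert v (F \<union> r))))"
      unfolding s a_def q_def by (simp only: mult_ac)
    show "sg r v * ?w (insert v r) = (-1) ^ card F * eps F r * (sg (F \<union> r) v * g (insert v (F \<union> r)))"
      by (simp only: l rr aa mult_1_left)
  qed
  also have "\<dots> = (-1) ^ card F * eps F r * bdV V g (F \<union> r)"
    unfolding bdV_def by (simp add: sum_distrib_left)
  finally show ?thesis .
qed

lemma chain_nz':
  assumes "is_chain K i c" "c s \<noteq> 0"
  shows "s \<in> K" "finite s" "int (card s) = i + 1"
  using assms by (auto simp: is_chain_def)

lemma cone_trivial:
  assumes fV: "finite V" and xV: "x \<in> V"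
  shows "reduced_homology_trivial (Pow V) i"
  unfolding reduced_homology_trivial_def
proof (intro allI impI, elim conjE)
  fix z assume zc: "is_chain (Pow V) i z" and zb: "bd (Pow V) z = (\<lambda>_. 0)"
  have zbV: "bdV V z = (\<lambda>_. 0)" using zb by (simp add: bd_eq_bdV)
  have zs: "z s = 0" if "\<not> s \<subseteq> V" for s using chain_nz'(1)[OF zc] that by blast
  define c where "c t = (if x \<in> t \<and> t \<subseteq> V then sg (t - {x}) x * z (t - {x}) else 0)" for t
  have cc: "is_chain (Pow V) (i + 1) c"
    unfolding is_chain_def
  proof (intro allI impI)
    fix t assume "c t \<noteq> 0"
    then have t: "x \<in> t" "t \<subseteq> V" "z (t - {x}) \<noteq> 0" by (auto simp: c_def split: if_splits)
    have f1: "finite (t - {x})" using chain_nz'(2)[OF zc t(3)] .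
    have f2: "int (card (t - {x})) = i + 1" using chain_nz'(3)[OF zc t(3)] .
    have ft: "finite t" using f1 by simp
    have "card t = Suc (card (t - {x}))" using card_Suc_Diff1[OF ft t(1)] by simp
    then show "t \<in> Pow V \<and> finite t \<and> int (card t) = i + 1 + 1" using t ft f2 by simp
  qed
  have "bdV V c s = z s" for s
  proof (cases "s \<subseteq> V")
    case False
    then have "c (insert v s) = 0" for v by (auto simp: c_def)
    then show ?thesis using zs False by (simp add: bdV_def)
  next
    case sV: True
    have fs: "finite s" using sV fV finite_subset by blast
    show ?thesis
    proof (cases "x \<in> s")
      case False
      have xVs: "x \<in> V - s" using xV False by auto
      have "bdV V c s = sg s x * c (insert x s) + (\<Sum>v\<in>V - s - {x}. sg s v * c (insert v s))"
        unfolding bdV_def by (rule sum.remove) (use fV xVs in auto)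
      also have "(\<Sum>v\<in>V - s - {x}. sg s v * c (insert v s)) = 0"
        using False by (intro sum.neutral) (auto simp: c_def)
      also have "c (insert x s) = sg s x * z s" using False sV xV by (simp add: c_def)
      finally have "bdV V c s = sg s x * (sg s x * z s) + 0" .
      also have "\<dots> = (sg s x * sg s x) * z s" by (simp only: mult.assoc add_0_right)
      finally show ?thesis by (simp only: sg_sq mult_1_left)
    next
      case True
      define r where "r = s - {x}"
      have fr: "finite r" and xr: "x \<notin> r" and sr: "s = insert x r" using fs True by (auto simp: r_def)
      have xVr: "x \<in> V - r" using xV xr by auto
      have "0 = bdV V z r" using zbV by simp
      also have "\<dots> = sg r x * z s + (\<Sum>v\<in>V - s. sg r v * z (insert v r))"
      proof -
        have "V - r - {x} = V - s" using sr by auto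
        have "bdV V z r = sg r x * z (insert x r) + (\<Sum>v\<in>V - r - {x}. sg r v * z (insert v r))"
          unfolding bdV_def by (rule sum.remove) (use fV xVr in auto)
        then show ?thesis using \<open>V - r - {x} = V - s\<close> sr by simp
      qed
      finally have eq0: "(\<Sum>v\<in>V - s. sg r v * z (insert v r)) = - sg r x * z s" by simp
      have "bdV V c s = (\<Sum>v\<in>V - s. - sg r x * (sg r v * z (insert v r)))"
        unfolding bdV_def
      proof (rule sum.cong[OF refl])
        fix v assume v: "v \<in> V - s"
        have vx: "v \<noteq> x" "v \<notin> r" using v sr by auto
        have e1: "insert v s - {x} = insert v r" using vx sr xr by auto
        have e2: "x \<in> insert v s" "insert v s \<subseteq> V" using v sr sV by auto
        have c1: "c (insert v s) = sg (insert v r) x * z (insert v r)"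
          unfolding c_def using e1 e2 by simp
        have s1: "sg s v = (if x < v then - sg r v else sg r v)" using sg_insert[OF fr xr] sr by simp
        have s2: "sg (insert v r) x = (if v < x then - sg r x else sg r x)" using sg_insert[OF fr vx(2)] by simp
        show "sg s v * c (insert v s) = - sg r x * (sg r v * z (insert v r))"
          unfolding c1 s1 s2 using vx(1) by (cases v x rule: linorder_cases) auto
      qed
      also have "\<dots> = - sg r x * (\<Sum>v\<in>V - s. sg r v * z (insert v r))"
        by (rule sum_distrib_left[symmetric])
      also have "\<dots> = - sg r x * (- sg r x * z s)" by (simp only: eq0)
      also have "\<dots> = (sg r x * sg r x) * z s" by (simp add: algebra_simps)
      also have "\<dots> = z s" by (simp only: sg_sq mult_1_left)
      finally show ?thesis .
    qed
  qed
  then have "bd (Pow V) c = z" by (simp add: bd_eq_bdV fun_eq_iff)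
  then show "\<exists>c. is_chain (Pow V) (i + 1) c \<and> bd (Pow V) c = z" using cc by blast
qed


lemma chain_nz:
  assumes "is_chain K i c" "c s \<noteq> 0"
  shows "s \<in> K" "finite s" "int (card s) = i + 1"
  using assms by (auto simp: is_chain_def)

lemma step:
  fixes V V' F :: "'a::linorder set" and K K' L :: "'a set set"
  assumes fV: "finite V" and FV: "F \<subseteq> V" and V'V: "V' \<subseteq> V - F"
    and KP: "K \<subseteq> Pow V" and K'P: "K' \<subseteq> Pow V" and LP: "L \<subseteq> Pow V'"
    and KK': "K \<subseteq> K'"
    and noF: "\<And>s. s \<in> K \<Longrightarrow> \<not> F \<subseteq> s"
    and K'K: "\<And>s. s \<in> K' \<Longrightarrow> \<not> F \<subseteq> s \<Longrightarrow> s \<in> K"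
    and down: "\<And>s t. s \<in> K' \<Longrightarrow> t \<subseteq> s \<Longrightarrow> t \<in> K'"
    and LK': "\<And>t. t \<in> L \<Longrightarrow> F \<union> t \<in> K'"
    and K'L: "\<And>t. t \<inter> F = {} \<Longrightarrow> F \<union> t \<in> K' \<Longrightarrow> t \<in> L"
    and H1: "reduced_homology_trivial K' i"
    and H2: "reduced_homology_trivial L (i + 1 - int (card F))"
  shows "reduced_homology_trivial K i"
  unfolding reduced_homology_trivial_def
proof (intro allI impI, elim conjE)
  have fF: "finite F" using fV FV finite_subset by blast
  have LPV: "L \<subseteq> Pow V" using LP V'V by auto
  fix z assume zc: "is_chain K i z" and zb: "bd K z = (\<lambda>_. 0)"
  have zbV: "bdV V z = (\<lambda>_. 0)" using bd_chain_eq[OF fV KP zc] zb by simp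
  have zc': "is_chain K' i z" unfolding is_chain_def using chain_nz[OF zc] KK' by blast
  have "bd K' z = (\<lambda>_. 0)" using bd_chain_eq[OF fV K'P zc'] zbV by simp
  then obtain c' where c'c: "is_chain K' (i+1) c'" and c'b: "bd K' c' = z"
    using H1 zc' unfolding reduced_homology_trivial_def by blast
  have c'bV: "bdV V c' = z" using bd_chain_eq[OF fV K'P c'c] c'b by simp
  define w where "w t = (if t \<inter> F = {} then eps F t * c' (F \<union> t) else 0)" for t
  have wc: "is_chain L (i + 1 - int (card F)) w"
    unfolding is_chain_def
  proof (intro allI impI)
    fix t assume "w t \<noteq> 0"
    then have tF: "t \<inter> F = {}" and nz: "c' (F \<union> t) \<noteq> 0" by (auto simp: w_def split: if_splits)
    have Ft: "F \<union> t \<in> K'" "finite (F \<union> t)" "int (card (F \<union> t)) = i + 1 + 1"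
      using chain_nz[OF c'c nz] by auto
    have ft: "finite t" using Ft by auto
    have "card (F \<union> t) = card F + card t" using tF fF ft by (intro card_Un_disjoint) auto
    then show "t \<in> L \<and> finite t \<and> int (card t) = i + 1 - int (card F) + 1"
      using Ft ft K'L[OF tF] by auto
  qed
  have wbV: "bdV V w = (\<lambda>_. 0)"
  proof
    fix r
    show "bdV V w r = 0"
    proof (cases "finite r \<and> r \<inter> F = {}")
      case True
      have weq: "w = (\<lambda>t. if t \<inter> F = {} then eps F t * c' (F \<union> t) else 0)"
        by (simp add: fun_eq_iff w_def)
      have "bdV V w r = (-1) ^ card F * eps F r * bdV V c' (F \<union> r)"
        unfolding weq using fV fF True by (intro KF) auto
      moreover have "F \<union> r \<notin> K" using noF by blast
      then have "z (F \<union> r) = 0" using chain_nz(1)[OF zc] by blast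
      then have "bdV V c' (F \<union> r) = 0" using c'bV by simp
      ultimately show ?thesis by simp
    next
      case False
      have "w (insert v r) = 0" for v
      proof (rule ccontr)
        assume "w (insert v r) \<noteq> 0"
        then have "finite (insert v r)" by (rule chain_nz(2)[OF wc])
        moreover have "insert v r \<inter> F = {}" using \<open>w (insert v r) \<noteq> 0\<close> by (auto simp: w_def split: if_splits)
        ultimately show False using False by auto
      qed
      then show ?thesis by (simp add: bdV_def)
    qed
  qed
  have "bd L w = (\<lambda>_. 0)" using bd_chain_eq[OF fV LPV wc] wbV by simp
  then obtain u where uc: "is_chain L (i + 1 - int (card F) + 1) u" and ub: "bd L u = w"
    using H2 wc unfolding reduced_homology_trivial_def by blast
  have ubV: "bdV V u = w" using bd_chain_eq[OF fV LPV uc] ub by simp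
  have uF: "u t = 0" if "t \<inter> F \<noteq> {}" for t
  proof (rule ccontr)
    assume "u t \<noteq> 0"
    then have "t \<in> L" by (rule chain_nz(1)[OF uc])
    then show False using LP V'V that by blast
  qed
  define b where "b s = (if F \<subseteq> s then (-1) ^ card F * eps F (s - F) * u (s - F) else 0)" for s
  have bc: "is_chain K' (i + 1 + 1) b"
    unfolding is_chain_def
  proof (intro allI impI)
    fix s assume "b s \<noteq> 0"
    then have Fs: "F \<subseteq> s" and nz: "u (s - F) \<noteq> 0" by (auto simp: b_def split: if_splits)
    have L1: "s - F \<in> L" by (rule chain_nz(1)[OF uc nz])
    have L2: "finite (s - F)" by (rule chain_nz(2)[OF uc nz])
    have L3: "int (card (s - F)) = i + 1 - int (card F) + 1 + 1" by (rule chain_nz(3)[OF uc nz])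
    have sF: "s = F \<union> (s - F)" using Fs by auto
    have fs: "finite s" using L2 fF sF by (metis finite_UnI)
    have "card (F \<union> (s - F)) = card F + card (s - F)"
      using fF L2 by (intro card_Un_disjoint) auto
    then have "card s = card F + card (s - F)" using sF by simp
    moreover have "s \<in> K'" using LK'[OF L1] sF by simp
    ultimately show "s \<in> K' \<and> finite s \<and> int (card s) = i + 1 + 1 + 1"
      using fs L3 by simp
  qed
  have wb: "(\<lambda>t. if t \<inter> F = {} then eps F t * b (F \<union> t) else 0) = (\<lambda>t. (-1) ^ card F * u t)"
  proof
    fix t
    show "(if t \<inter> F = {} then eps F t * b (F \<union> t) else 0) = (-1) ^ card F * u t"
    proof (cases "t \<inter> F = {}")
      case True
      then have "(F \<union> t) - F = t" by auto
      then have "eps F t * b (F \<union> t) = (eps F t * eps F t) * ((-1) ^ card F * u t)"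
        by (simp add: b_def algebra_simps)
      then show ?thesis using True by (simp add: eps_sq)
    next
      case False
      then show ?thesis using uF by simp
    qed
  qed
  define c where "c s = c' s - bdV V b s" for s
  have bfin: "\<And>t. b t \<noteq> 0 \<Longrightarrow> finite t" by (rule chain_nz(2)[OF bc])
  have cb: "bdV V c = z"
  proof
    fix s show "bdV V c s = z s"
      unfolding c_def bdV_diff using bdV_bdV[OF fV bfin] c'bV by simp
  qed
  have bbc: "is_chain K' (i + 1) (bdV V b)" by (rule bdV_chain[OF fV K'P down bc])
  have cc: "is_chain K (i + 1) c"
    unfolding is_chain_def
  proof (intro allI impI)
    fix s assume cs: "c s \<noteq> 0"
    then have "c' s \<noteq> 0 \<or> bdV V b s \<noteq> 0" by (auto simp: c_def)
    then have sK': "s \<in> K' \<and> finite s \<and> int (card s) = i + 1 + 1"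
      using chain_nz[OF c'c] chain_nz[OF bbc] by blast
    have "s \<in> K"
    proof (rule ccontr)
      assume "s \<notin> K"
      then have Fs: "F \<subseteq> s" using K'K sK' by blast
      define r where "r = s - F"
      have fr: "finite r" and rF: "r \<inter> F = {}" and sr: "s = F \<union> r" using sK' Fs by (auto simp: r_def)
      have "bdV V (\<lambda>t. if t \<inter> F = {} then eps F t * b (F \<union> t) else 0) r
         = (-1) ^ card F * eps F r * bdV V b (F \<union> r)"
        by (rule KF[OF fV fF fr rF])
      then have "(-1) ^ card F * w r = (-1) ^ card F * eps F r * bdV V b s"
        unfolding wb bdV_scale ubV sr by simp
      then have "w r = eps F r * bdV V b s" by (simp add: power_0_left)
      then have "eps F r * w r = (eps F r * eps F r) * bdV V b s" by (simp add: algebra_simps)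
      then have "bdV V b s = eps F r * w r" by (simp add: eps_sq)
      also have "\<dots> = (eps F r * eps F r) * c' s" using rF sr by (simp add: w_def algebra_simps)
      finally have "c s = 0" by (simp add: c_def eps_sq)
      then show False using cs by simp
    qed
    then show "s \<in> K \<and> finite s \<and> int (card s) = i + 1 + 1" using sK' by blast
  qed
  have "bd K c = z" using bd_chain_eq[OF fV KP cc] cb by simp
  then show "\<exists>c. is_chain K (i + 1) c \<and> bd K c = z" using cc by blast
qed


declare psi.simps[simp del]

lemma Ind_Pow: "Ind V C \<subseteq> Pow V" by (auto simp: Ind_def)

lemma Ind_down: "s \<in> Ind V C \<Longrightarrow> t \<subseteq> s \<Longrightarrow> t \<in> Ind V C"
  unfolding Ind_def by blast

lemma Ind_empty: "Ind V {} = Pow V" by (auto simp: Ind_def)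

lemma colon_facts:
  assumes H: "is_hypergraph V C" and FC: "F \<in> C"
  defines "V' \<equiv> colon_vertices V C F" and "CE \<equiv> colon_edges C F"
  shows "is_hypergraph V' CE"
    and "\<And>t. t \<in> Ind V' CE \<Longrightarrow> F \<union> t \<in> Ind V (C - {F})"
    and "\<And>t. t \<inter> F = {} \<Longrightarrow> F \<union> t \<in> Ind V (C - {F}) \<Longrightarrow> t \<in> Ind V' CE"
    and "V' \<subseteq> V - F"
proof -
  have fV: "finite V" and CV: "\<And>E. E \<in> C \<Longrightarrow> E \<subseteq> V" and C2: "\<And>E. E \<in> C \<Longrightarrow> 2 \<le> card E"
    and inc: "\<And>E E'. E \<in> C \<Longrightarrow> E' \<in> C \<Longrightarrow> E \<subseteq> E' \<Longrightarrow> E = E'"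
    using H unfolding is_hypergraph_def by auto
  have fC: "finite C" using CV fV by (meson Pow_iff finite_Pow_iff finite_subset subsetI)
  have FV: "F \<subseteq> V" using CV FC by auto
  define fam where "fam = (\<lambda>E. E - F) ` (C - {F})"
  have ffam: "finite fam" using fC by (simp add: fam_def)
  have CE_def': "CE = {M \<in> fam. (\<forall>M'\<in>fam. \<not> M' \<subset> M) \<and> 2 \<le> card M}"
    unfolding CE_def colon_edges_def fam_def Let_def by simp
  have nonempty: "E - F \<noteq> {}" if "E \<in> C" "E \<noteq> F" for E
    using inc[OF that(1) FC] that by auto
  have nb: "x \<in> nbhd C F \<longleftrightarrow> (\<exists>E\<in>C. card (E - F) = 1 \<and> x \<in> E - F)" for x
    unfolding nbhd_def by auto
  show V'sub: "V' \<subseteq> V - F" unfolding V'_def colon_vertices_def by auto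
  have V'nb: "x \<in> V' \<Longrightarrow> x \<notin> nbhd C F" for x unfolding V'_def colon_vertices_def by auto
  have minbelow: "\<exists>M\<in>fam. M \<subseteq> X \<and> (\<forall>M'\<in>fam. \<not> M' \<subset> M)" if "X \<in> fam" for X
  proof -
    have "finite {M \<in> fam. M \<subseteq> X}" "{M \<in> fam. M \<subseteq> X} \<noteq> {}" using ffam that by auto
    from finite_has_minimal[OF this] obtain M where M: "M \<in> fam" "M \<subseteq> X"
      "\<forall>b\<in>{M \<in> fam. M \<subseteq> X}. b \<le> M \<longrightarrow> M = b" by blast
    then show ?thesis by (intro bexI[of _ M]) auto
  qed
  show "is_hypergraph V' CE"
    unfolding is_hypergraph_def
  proof (intro conjI ballI impI)
    show "finite V'" using V'sub fV finite_subset by blast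
  next
    fix M assume M: "M \<in> CE"
    then obtain E where E: "E \<in> C" "E \<noteq> F" "M = E - F" using CE_def' fam_def by auto
    have "M \<subseteq> V - F" using E CV by auto
    moreover have "x \<notin> nbhd C F" if "x \<in> M" for x
    proof
      assume "x \<in> nbhd C F"
      then obtain E' where E': "E' \<in> C" "card (E' - F) = 1" "x \<in> E' - F" using nb by blast
      have "E' \<noteq> F" using E' by auto
      then have "E' - F \<in> fam" using E' by (auto simp: fam_def)
      moreover have "E' - F = {x}" using E' by (metis card_1_singletonE singletonD)
      moreover have "card M \<ge> 2" using M CE_def' by auto
      then have "{x} \<subset> M" using that by auto
      ultimately show False using M CE_def' by auto
    qed
    ultimately show "M \<subseteq> V'" unfolding V'_def colon_vertices_def by auto
    show "2 \<le> card M" using M CE_def' by auto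
  next
    fix M M' assume "M \<in> CE" "M' \<in> CE" "M \<subseteq> M'"
    then show "M = M'" using CE_def' by auto
  qed
  show "F \<union> t \<in> Ind V (C - {F})" if t: "t \<in> Ind V' CE" for t
  proof -
    have tV': "t \<subseteq> V'" and tCE: "\<And>M. M \<in> CE \<Longrightarrow> \<not> M \<subseteq> t" using t by (auto simp: Ind_def)
    have "\<not> E \<subseteq> F \<union> t" if E: "E \<in> C - {F}" for E
    proof
      assume EFt: "E \<subseteq> F \<union> t"
      have "E - F \<in> fam" using E by (auto simp: fam_def)
      then obtain M where M: "M \<in> fam" "M \<subseteq> E - F" "\<forall>M'\<in>fam. \<not> M' \<subset> M" using minbelow by blast
      then obtain E' where E': "E' \<in> C" "E' \<noteq> F" "M = E' - F" by (auto simp: fam_def)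
      have Mt: "M \<subseteq> t" using M EFt by auto
      have "M \<noteq> {}" using nonempty E' by auto
      have fM: "finite M" using E' CV fV finite_subset by blast
      show False
      proof (cases "card M \<ge> 2")
        case True
        then have "M \<in> CE" using M CE_def' by auto
        then show False using tCE Mt by blast
      next
        case False
        have "card M \<noteq> 0" using \<open>M \<noteq> {}\<close> fM by simp
        then have "card M = 1" using False by linarith
        then obtain x where "M = {x}" by (meson card_1_singletonE)
        then have "card (E' - F) = 1" "x \<in> E' - F" using E'(3) \<open>card M = 1\<close> by auto
        then have "x \<in> nbhd C F" using nb E'(1) by blast
        moreover have "x \<in> V'" using Mt tV' \<open>M = {x}\<close> by auto
        ultimately show False using V'nb by blast
      qed
    qed
    moreover have "F \<union> t \<subseteq> V" using FV tV' V'sub by auto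
    ultimately show ?thesis by (auto simp: Ind_def)
  qed
  show "t \<in> Ind V' CE" if tF: "t \<inter> F = {}" and Ft: "F \<union> t \<in> Ind V (C - {F})" for t
  proof -
    have tV: "t \<subseteq> V" and noE: "\<And>E. E \<in> C \<Longrightarrow> E \<noteq> F \<Longrightarrow> \<not> E \<subseteq> F \<union> t" using Ft by (auto simp: Ind_def)
    have "x \<notin> nbhd C F" if "x \<in> t" for x
    proof
      assume "x \<in> nbhd C F"
      then obtain E where E: "E \<in> C" "card (E - F) = 1" "x \<in> E - F" using nb by blast
      have "E - F = {x}" using E by (metis card_1_singletonE singletonD)
      then have "E \<subseteq> F \<union> t" using that by auto
      moreover have "E \<noteq> F" using E by auto
      ultimately show False using noE E by blast
    qed
    then have "t \<subseteq> V'" using tV tF unfolding V'_def colon_vertices_def by auto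
    moreover have "\<not> M \<subseteq> t" if MCE: "M \<in> CE" for M
    proof
      assume "M \<subseteq> t"
      obtain E where E: "E \<in> C" "E \<noteq> F" "M = E - F" using MCE CE_def' fam_def by auto
      then have "E \<subseteq> F \<union> t" using \<open>M \<subseteq> t\<close> by auto
      then show False using noE E by blast
    qed
    ultimately show ?thesis by (auto simp: Ind_def)
  qed
qed

lemma main:
  "is_hypergraph V C \<Longrightarrow> enat (nat (i + 2)) \<le> psi V C \<Longrightarrow> reduced_homology_trivial (Ind V C) i"
proof (induction V C arbitrary: i rule: psi.induct)
  case (1 V C)
  note H = "1.prems"(1)
  have fV: "finite V" and CV: "\<And>E. E \<in> C \<Longrightarrow> E \<subseteq> V" and C2: "\<And>E. E \<in> C \<Longrightarrow> 2 \<le> card E"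
    using H unfolding is_hypergraph_def by auto
  have ok: "finite V \<and> (\<forall>E\<in>C. E \<subseteq> V \<and> 2 \<le> card E)" using fV CV C2 by auto
  show ?case
  proof (cases "i \<le> -2")
    case True
    then show ?thesis by (rule low_trivial)
  next
    case ilow: False
    show ?thesis
    proof (cases "V = {}")
      case True
      then have "psi V C = 0" by (subst psi.simps) simp
      then show ?thesis using "1.prems"(2) ilow by (simp add: zero_enat_def)
    next
      case Vne: False
      show ?thesis
      proof (cases "C = {}")
        case True
        obtain x where "x \<in> V" using Vne by blast
        then show ?thesis using cone_trivial[OF fV] True by (simp add: Ind_empty)
      next
        case Cne: False
        have fC: "finite C" using CV fV by (meson Pow_iff finite_Pow_iff finite_subset subsetI)
        define f where "f F = min (psi V (C - {F}))
                          (psi (colon_vertices V C F) (colon_edges C F) + enat (card F - 1))" for F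
        have "psi V C = Max (f ` C)"
          by (subst psi.simps) (use ok Vne Cne in \<open>simp add: f_def\<close>)
        moreover have "Max (f ` C) \<in> f ` C" using fC Cne by (intro Max_in) auto
        ultimately obtain F where FC: "F \<in> C" and pF: "psi V C = f F" by auto
        have FV: "F \<subseteq> V" and F2: "2 \<le> card F" using CV C2 FC by auto
        have H': "is_hypergraph V (C - {F})" using H unfolding is_hypergraph_def by auto
        note cf = colon_facts[OF H FC]
        have le1: "enat (nat (i + 2)) \<le> psi V (C - {F})"
          using "1.prems"(2) pF by (simp add: f_def)
        have le2: "enat (nat (i + 1 - int (card F) + 2)) \<le> psi (colon_vertices V C F) (colon_edges C F)"
        proof (cases "psi (colon_vertices V C F) (colon_edges C F)")
          case (enat m)
          have "enat (nat (i + 2)) \<le> enat m + enat (card F - 1)"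
            using "1.prems"(2) pF enat by (simp add: f_def)
          then have "nat (i + 2) \<le> m + (card F - 1)" by simp
          then show ?thesis using enat F2 by simp
        next
          case infinity
          then show ?thesis by simp
        qed
        have IH1: "reduced_homology_trivial (Ind V (C - {F})) i"
          using "1.IH"(1)[OF _ Vne Cne FC H' le1] ok by blast
        have IH2: "reduced_homology_trivial (Ind (colon_vertices V C F) (colon_edges C F)) (i + 1 - int (card F))"
          using "1.IH"(2)[OF _ Vne Cne FC cf(1) le2] ok by blast
        show ?thesis
        proof (rule step[OF fV FV cf(4) Ind_Pow Ind_Pow Ind_Pow _ _ _ _ _ _ IH1 IH2])
          show "Ind V C \<subseteq> Ind V (C - {F})" by (auto simp: Ind_def)
          show "\<not> F \<subseteq> s" if "s \<in> Ind V C" for s using that FC by (auto simp: Ind_def)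
          show "s \<in> Ind V C" if "s \<in> Ind V (C - {F})" "\<not> F \<subseteq> s" for s
            using that by (auto simp: Ind_def)
          show "t \<in> Ind V (C - {F})" if "s \<in> Ind V (C - {F})" "t \<subseteq> s" for s t
            using that by (rule Ind_down)
          show "F \<union> t \<in> Ind V (C - {F})" if "t \<in> Ind (colon_vertices V C F) (colon_edges C F)" for t
            using cf(2) that by blast
          show "t \<in> Ind (colon_vertices V C F) (colon_edges C F)"
            if "t \<inter> F = {}" "F \<union> t \<in> Ind V (C - {F})" for t
            using cf(3) that by blast
        qed
      qed
    qed
  qed
qed

theorem corollary3p3:
  fixes V :: "'a::linorder set" and C :: "'a set set"
  assumes "is_hypergraph V C"
  shows "conn_h (Ind V C) \<ge> ereal_of_enat (psi V C) - 2"
proof -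
  let ?S = "{ereal (real_of_int k) | k. \<forall>i\<le>k. reduced_homology_trivial (Ind V C) i}"
  have mem: "ereal (real_of_int k) \<le> conn_h (Ind V C)"
    if "\<And>i. i \<le> k \<Longrightarrow> enat (nat (i + 2)) \<le> psi V C" for k
  proof -
    have "ereal (real_of_int k) \<in> ?S" using main[OF assms] that by blast
    then show ?thesis unfolding conn_h_def by (rule Sup_upper)
  qed
  show ?thesis
  proof (cases "psi V C")
    case (enat m)
    have "ereal (real_of_int (int m - 2)) \<le> conn_h (Ind V C)"
      by (rule mem) (simp add: enat)
    then show ?thesis using enat by simp
  next
    case infinity
    have all: "ereal (real_of_int k) \<le> conn_h (Ind V C)" for k by (rule mem) (simp add: infinity)
    then have "conn_h (Ind V C) = \<infinity>"
    proof (cases "conn_h (Ind V C)")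
      case (real r)
      have "ereal (real_of_int (\<lceil>r\<rceil> + 1)) \<le> ereal r" using all[of "\<lceil>r\<rceil> + 1"] real by simp
      then show ?thesis by simp linarith
    next
      case MInf
      then show ?thesis using all[of 0] by simp
    qed simp
    then show ?thesis by simp
  qed
qed

end
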